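(* Let $S\subset\mathbb{R}^2$, $s=(s_1,s_2)\in S$, and let $\ell(x,\xi)=\rho(\|x-\xi\|)$, where $\rho:[0,\infty)\to(0,1)$ is continuously differentiable. Consider $\xi_1,\dots,\xi_N\in\mathbb{R}^2$, $\xi_k=(\xi_{k,1},\xi_{k,2})$, constrained so that $\|\xi_k-s\|=\|\xi_m-s\|>0$ for all $k,m\in\{1,\dots,N\}$. Let $\theta_k=\mathrm{atan2}(\xi_{k,2}-s_2,\xi_{k,1}-s_1)$ and $r=\|\xi_1-s\|$, and let $$I(s;\xi_{1:N})=\sum_{k=1}^N\frac{\nabla_s\ell(s,\xi_k)\nabla_s\ell(s,\xi_k)^\top}{\ell(s,\xi_k)[1-\ell(s,\xi_k)]}$$ be the Fisher information matrix for $s$ from independent binary measurements at $\xi_1,\dots,\xi_N$ with detection probabilities $\ell(s,\xi_k)$. Then: (1) For any fixed $r>0$, $\det I(s;\xi_{1:N})$ is maximised (over $\theta_1,\dots,\theta_N$) if and only if $\sum_{k=1}^N\cos(2\theta_k)=0$ and $\sum_{k=1}^N\sin(2\theta_k)=0$. (2) Under the additional constraint $r\in[r_1,r_2]$ for some $0<r_1\le r_2$, for any fixed $\theta_1,\dots,\theta_N$, $\det I(s;\xi_{1:N})$ is maximised (over $r$) if and only if $r\in\operatorname*{argmax}_{x\in[r_1,r_2]}\frac{\rho'(x)^2}{\rho(x)[1-\rho(x)]}$. (3) Optimising jointly over $\theta_1,\dots,\theta_N\in\mathbb{R}$ and $r\in[r_1,r_2]$, $\det I(s;\xi_{1:N})$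 is maximised if and only if both $\sum_{k=1}^N\cos(2\theta_k)=\sum_{k=1}^N\sin(2\theta_k)=0$ and $r\in\operatorname*{argmax}_{x\in[r_1,r_2]}\frac{\rho'(x)^2}{\rho(x)[1-\rho(x)]}$.
   Context: Here $\xi_k=s+r(\cos\theta_k,\sin\theta_k)$, so the configuration is parametrised by $r$ and $\theta_1,\dots,\theta_N$. *)

theory Defs
  imports "HOL-Analysis.Analysis"
begin

definition ell :: "(real \<Rightarrow> real) \<Rightarrow> real^2 \<Rightarrow> real^2 \<Rightarrow> real" where
  "ell \<rho> x \<xi> = \<rho> (norm (x - \<xi>))"

definition grad :: "(real^2 \<Rightarrow> real) \<Rightarrow> real^2 \<Rightarrow> real^2" where
  "grad f x = (THE D. GDERIV f x :> D)"

definition outer :: "real^2 \<Rightarrow> real^2^2" where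
  "outer v = (\<chi> i j. v $ i * v $ j)"

definition fisher_info :: "(real \<Rightarrow> real) \<Rightarrow> nat \<Rightarrow> real^2 \<Rightarrow> (nat \<Rightarrow> real^2) \<Rightarrow> real^2^2" where
  "fisher_info \<rho> N s \<xi> =
     (\<Sum>k\<in>{1..N}. (1 / (ell \<rho> s (\<xi> k) * (1 - ell \<rho> s (\<xi> k))))
                      *\<^sub>R outer (grad (\<lambda>x. ell \<rho> x (\<xi> k)) s))"

definition sensors :: "real^2 \<Rightarrow> real \<Rightarrow> (nat \<Rightarrow> real) \<Rightarrow> nat \<Rightarrow> real^2" where
  "sensors s r \<theta> k = s + r *\<^sub>R vector [cos (\<theta> k), sin (\<theta> k)]"

definition detI :: "(real \<Rightarrow> real) \<Rightarrow> nat \<Rightarrow> real^2 \<Rightarrow> real \<Rightarrow> (nat \<Rightarrow> real) \<Rightarrow> real" where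
  "detI \<rho> N s r \<theta> = det (fisher_info \<rho> N s (sensors s r \<theta>))"

definition argmax_on :: "(real \<Rightarrow> real) \<Rightarrow> real set \<Rightarrow> real set" where
  "argmax_on f A = {x \<in> A. \<forall>y\<in>A. f y \<le> f x}"

end

theory Submission
  imports Defs
begin


lemma gderiv_unique:
  assumes "GDERIV f x :> D1" "GDERIV f x :> D2" shows "D1 = D2"
proof -
  have "(\<lambda>h. inner h D1) = (\<lambda>h. inner h D2)"
    using has_derivative_unique assms unfolding gderiv_def by blast
  then have "inner (D1 - D2) D1 = inner (D1 - D2) D2" by metis
  then have "inner (D1 - D2) (D1 - D2) = 0" by (simp add: inner_diff_right)
  then show ?thesis by simp
qed

lemma grad_eqI: "GDERIV f x :> D \<Longrightarrow> grad f x = D"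
  unfolding grad_def using gderiv_unique by blast

lemma norm_u: "norm (vector [cos t, sin t] :: real^2) = 1"
  unfolding norm_eq_sqrt_inner inner_vec_def by (simp add: sum_2)

lemma grad_sensor:
  assumes rho_deriv: "\<forall>x\<ge>0. (\<rho> has_real_derivative \<rho>' x) (at x within {0..})"
    and r: "r > 0"
  shows "grad (\<lambda>x. ell \<rho> x (sensors s r \<theta> k)) s = (- \<rho>' r) *\<^sub>R (vector [cos (\<theta> k), sin (\<theta> k)] :: real^2)"
proof -
  let ?u = "vector [cos (\<theta> k), sin (\<theta> k)] :: real^2"
  let ?\<xi> = "sensors s r \<theta> k"
  have v: "s - ?\<xi> = (- r) *\<^sub>R ?u" by (simp add: sensors_def)
  have nv: "norm (s - ?\<xi>) = r" using v r norm_u by simp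
  have sg: "sgn (s - ?\<xi>) = - ?u" using v nv r by (simp add: sgn_div_norm)
  have g1: "GDERIV (\<lambda>x. norm (x - ?\<xi>)) s :> sgn (s - ?\<xi>)"
  proof -
    have "s - ?\<xi> \<noteq> 0" using nv r by auto
    from has_derivative_norm[OF this] have "(norm has_derivative (\<lambda>h. inner h (sgn (s - ?\<xi>)))) (at (s - ?\<xi>))" .
    moreover have "((\<lambda>x. x - ?\<xi>) has_derivative (\<lambda>h. h)) (at s)"
      by (auto intro!: derivative_eq_intros)
    ultimately show ?thesis unfolding gderiv_def
      using has_derivative_compose by fastforce
  qed
  have d: "DERIV \<rho> (norm (s - ?\<xi>)) :> \<rho>' r"
  proof -
    have "(\<rho> has_real_derivative \<rho>' r) (at r within {0..})" using rho_deriv r by auto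
    moreover have "at r within {0..} = at r" using r by (intro at_within_interior) simp
    ultimately show ?thesis using nv by simp
  qed
  have "GDERIV (\<lambda>x. \<rho> (norm (x - ?\<xi>))) s :> \<rho>' r *\<^sub>R sgn (s - ?\<xi>)"
    using GDERIV_DERIV_compose[OF g1 d] by simp
  then have "grad (\<lambda>x. ell \<rho> x ?\<xi>) s = \<rho>' r *\<^sub>R sgn (s - ?\<xi>)"
    unfolding ell_def by (rule grad_eqI)
  then show ?thesis using sg by simp
qed


definition cc :: "(real \<Rightarrow> real) \<Rightarrow> (real \<Rightarrow> real) \<Rightarrow> real \<Rightarrow> real" where
  "cc \<rho> \<rho>' x = (\<rho>' x)\<^sup>2 / (\<rho> x * (1 - \<rho> x))"

definition DD :: "nat \<Rightarrow> (nat \<Rightarrow> real) \<Rightarrow> real" where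
  "DD N \<theta> = (\<Sum>k\<in>{1..N}. (cos (\<theta> k))\<^sup>2) * (\<Sum>k\<in>{1..N}. (sin (\<theta> k))\<^sup>2)
     - (\<Sum>k\<in>{1..N}. cos (\<theta> k) * sin (\<theta> k))\<^sup>2"

lemma ell_sensor: "r > 0 \<Longrightarrow> ell \<rho> s (sensors s r \<theta> k) = \<rho> r"
  unfolding ell_def sensors_def using norm_u[of "\<theta> k"] by simp

lemma detI_formula:
  assumes rho_deriv: "\<forall>x\<ge>0. (\<rho> has_real_derivative \<rho>' x) (at x within {0..})"
    and r: "r > 0"
  shows "detI \<rho> N s r \<theta> = (cc \<rho> \<rho>' r)\<^sup>2 * DD N \<theta>"
proof -
  let ?a = "(\<rho>' r)\<^sup>2 / (\<rho> r * (1 - \<rho> r))"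
  have F: "fisher_info \<rho> N s (sensors s r \<theta>) $ i $ j =
      ?a * (\<Sum>k\<in>{1..N}. (vector [cos (\<theta> k), sin (\<theta> k)] :: real^2) $ i * (vector [cos (\<theta> k), sin (\<theta> k)] :: real^2) $ j)" for i j
    unfolding fisher_info_def sum_distrib_left using grad_sensor[OF rho_deriv r] ell_sensor[OF r]
    by (simp add: outer_def power2_eq_square algebra_simps)
  show ?thesis
    unfolding detI_def det_2 F cc_def DD_def vector_2
    by (simp add: power2_eq_square algebra_simps)
qed


lemma lagrange2:
  fixes a b :: "nat \<Rightarrow> real"
  shows "2 * ((\<Sum>k\<in>A. (a k)\<^sup>2) * (\<Sum>k\<in>A. (b k)\<^sup>2) - (\<Sum>k\<in>A. a k * b k)\<^sup>2)
     = (\<Sum>k\<in>A. \<Sum>m\<in>A. (a k * b m - a m * b k)\<^sup>2)"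
proof -
  have e: "(a k * b m - a m * b k)\<^sup>2 = (a k)\<^sup>2 * (b m)\<^sup>2 + (a m)\<^sup>2 * (b k)\<^sup>2 - 2 * ((a k * b k) * (a m * b m))" for k m
    by (simp add: power2_eq_square algebra_simps)
  show ?thesis
    unfolding e sum_subtractf sum.distrib sum_distrib_left[symmetric] sum_distrib_right[symmetric]
    by (simp add: power2_eq_square algebra_simps sum.swap[of "\<lambda>k m. (a m)\<^sup>2 * (b k)\<^sup>2"])
qed

lemma DD_sin: "2 * DD N \<theta> = (\<Sum>k\<in>{1..N}. \<Sum>m\<in>{1..N}. (sin (\<theta> m - \<theta> k))\<^sup>2)"
  unfolding DD_def lagrange2 by (simp add: sin_diff algebra_simps)

lemma DD_pos:
  assumes "k \<in> {1..N}" "m \<in> {1..N}" "sin (\<theta> k - \<theta> m) \<noteq> 0"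
  shows "DD N \<theta> > 0"
proof -
  have "0 < (\<Sum>m'\<in>{1..N}. (sin (\<theta> m' - \<theta> m))\<^sup>2)"
    using assms by (intro sum_pos2[of _ k]) auto
  also have "\<dots> \<le> (\<Sum>k\<in>{1..N}. \<Sum>m\<in>{1..N}. (sin (\<theta> m - \<theta> k))\<^sup>2)"
    using assms by (intro member_le_sum sum_nonneg) auto
  finally show ?thesis using DD_sin[of N \<theta>] by simp
qed

lemma DD_cos2: "4 * DD N \<theta> = (real N)\<^sup>2 - (\<Sum>k\<in>{1..N}. cos (2 * \<theta> k))\<^sup>2 - (\<Sum>k\<in>{1..N}. sin (2 * \<theta> k))\<^sup>2"
proof -
  have c: "(cos (\<theta> k))\<^sup>2 = (1 + cos (2 * \<theta> k)) / 2" for k by (simp add: cos_double_cos)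
  have s: "(sin (\<theta> k))\<^sup>2 = (1 - cos (2 * \<theta> k)) / 2" for k by (simp add: cos_double_sin)
  have cs: "cos (\<theta> k) * sin (\<theta> k) = sin (2 * \<theta> k) / 2" for k by (simp add: sin_double)
  show ?thesis unfolding DD_def c s cs
    apply (simp add: sum_divide_distrib[symmetric] sum.distrib sum_subtractf power2_eq_square algebra_simps)
    apply (simp add: field_simps)
    done
qed

lemma zero_config:
  assumes "N \<ge> 2"
  shows "(\<Sum>k\<in>{1..N}. cos (2 * (real k * pi / real N))) = 0 \<and> (\<Sum>k\<in>{1..N}. sin (2 * (real k * pi / real N))) = 0"
proof -
  define z where "z = cis (2 * pi / real N)"
  have zk: "z ^ k = cis (2 * (real k * pi / real N))" for k
    unfolding z_def Complex.DeMoivre by (rule arg_cong[of _ _ cis]) (simp add: field_simps)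
  have zN: "z ^ N = 1" unfolding zk using assms by simp
  have z1: "z \<noteq> 1"
  proof
    assume "z = 1"
    then have "cos (2 * pi / real N) = 1" unfolding z_def by (metis cis.sel(1) one_complex.sel(1))
    then obtain n :: int where n: "2 * pi / real N = real_of_int n * 2 * pi" using cos_one_2pi_int by blast
    then have "(2 * pi) * (1 / real N) = (2 * pi) * real_of_int n" by simp
    then have "1 / real N = real_of_int n" using pi_gt_zero by (simp only: mult_cancel_left) simp
    moreover have "0 < 1 / real N" "1 / real N < 1" using assms by auto
    ultimately have "0 < n" "n < 1" by (metis of_int_0_less_iff, metis of_int_less_1_iff)
    then show False by simp
  qed
  have "(1 - z) * (\<Sum>k=1..N. z ^ k) = z ^ 1 - z ^ Suc N"
    using assms by (intro sum_gp_multiplied) auto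
  also have "\<dots> = 0" using zN by simp
  finally have "(\<Sum>k=1..N. z ^ k) = 0" using z1 by simp
  then have "Re (\<Sum>k=1..N. z ^ k) = 0" "Im (\<Sum>k=1..N. z ^ k) = 0" by simp_all
  then show ?thesis unfolding zk Re_sum Im_sum by simp
qed


theorem theorem5:
  fixes \<rho> \<rho>' :: "real \<Rightarrow> real" and S :: "(real^2) set" and s :: "real^2"
    and N :: nat and r\<^sub>1 r\<^sub>2 :: real
  assumes "s \<in> S"
    and "N \<ge> 2"
    and rho_range: "\<forall>x\<ge>0. 0 < \<rho> x \<and> \<rho> x < 1"
    and rho_deriv: "\<forall>x\<ge>0. (\<rho> has_real_derivative \<rho>' x) (at x within {0..})"
    and rho'_cont: "continuous_on {0..} \<rho>'"
    and "0 < r\<^sub>1" and "r\<^sub>1 \<le> r\<^sub>2"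
  shows
    "(\<forall>r>0. \<rho>' r \<noteq> 0 \<longrightarrow>
        (\<forall>\<theta>. (\<forall>\<theta>'. detI \<rho> N s r \<theta>' \<le> detI \<rho> N s r \<theta>) \<longleftrightarrow>
              ((\<Sum>k\<in>{1..N}. cos (2 * \<theta> k)) = 0 \<and> (\<Sum>k\<in>{1..N}. sin (2 * \<theta> k)) = 0)))
   \<and> (\<forall>\<theta>. (\<exists>k\<in>{1..N}. \<exists>m\<in>{1..N}. sin (\<theta> k - \<theta> m) \<noteq> 0) \<longrightarrow>
        (\<forall>r\<in>{r\<^sub>1..r\<^sub>2}. (\<forall>r'\<in>{r\<^sub>1..r\<^sub>2}. detI \<rho> N s r' \<theta> \<le> detI \<rho> N s r \<theta>) \<longleftrightarrow>
              r \<in> argmax_on (\<lambda>x. (\<rho>' x)\<^sup>2 / (\<rho> x * (1 - \<rho> x))) {r\<^sub>1..r\<^sub>2}))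
   \<and> ((\<exists>x\<in>{r\<^sub>1..r\<^sub>2}. \<rho>' x \<noteq> 0) \<longrightarrow>
        (\<forall>\<theta>. \<forall>r\<in>{r\<^sub>1..r\<^sub>2}.
           (\<forall>\<theta>'. \<forall>r'\<in>{r\<^sub>1..r\<^sub>2}. detI \<rho> N s r' \<theta>' \<le> detI \<rho> N s r \<theta>) \<longleftrightarrow>
           ((\<Sum>k\<in>{1..N}. cos (2 * \<theta> k)) = 0 \<and> (\<Sum>k\<in>{1..N}. sin (2 * \<theta> k)) = 0
            \<and> r \<in> argmax_on (\<lambda>x. (\<rho>' x)\<^sup>2 / (\<rho> x * (1 - \<rho> x))) {r\<^sub>1..r\<^sub>2})))"
proof -
  let ?c = "cc \<rho> \<rho>'"
  have fc: "(\<lambda>x. (\<rho>' x)\<^sup>2 / (\<rho> x * (1 - \<rho> x))) = ?c" by (simp add: cc_def fun_eq_iff)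
  have cnn: "?c x \<ge> 0" if "x \<ge> 0" for x
    using rho_range that unfolding cc_def by (auto intro!: divide_nonneg_pos)
  have cpos: "?c x > 0" if "x \<ge> 0" "\<rho>' x \<noteq> 0" for x
    using rho_range that unfolding cc_def by (auto intro!: divide_pos_pos)
  have sq: "(?c a)\<^sup>2 \<le> (?c b)\<^sup>2 \<longleftrightarrow> ?c a \<le> ?c b" if "a \<ge> 0" "b \<ge> 0" for a b
  proof
    assume "(?c a)\<^sup>2 \<le> (?c b)\<^sup>2" then show "?c a \<le> ?c b"
      using cnn[OF that(2)] by (rule power2_le_imp_le)
  next
    assume "?c a \<le> ?c b" then show "(?c a)\<^sup>2 \<le> (?c b)\<^sup>2"
      using cnn[OF that(1)] by (intro power_mono)
  qed
  have dI: "detI \<rho> N s r \<theta> = (?c r)\<^sup>2 * DD N \<theta>" if "r > 0" for r \<theta>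
    using detI_formula[OF rho_deriv that] .
  define C where "C \<theta> = (\<Sum>k\<in>{1..N}. cos (2 * \<theta> k))" for \<theta> :: "nat \<Rightarrow> real"
  define Sn where "Sn \<theta> = (\<Sum>k\<in>{1..N}. sin (2 * \<theta> k))" for \<theta> :: "nat \<Rightarrow> real"
  have DDe: "4 * DD N \<theta> = (real N)\<^sup>2 - (C \<theta>)\<^sup>2 - (Sn \<theta>)\<^sup>2" for \<theta>
    using DD_cos2[of N \<theta>] unfolding C_def Sn_def .
  have DDle: "DD N \<theta> \<le> (real N)\<^sup>2 / 4" for \<theta>
    using DDe[of \<theta>] zero_le_power2[of "C \<theta>"] zero_le_power2[of "Sn \<theta>"] by linarith
  have DDmax: "DD N \<theta> = (real N)\<^sup>2 / 4 \<longleftrightarrow> C \<theta> = 0 \<and> Sn \<theta> = 0" for \<theta>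
  proof -
    have "DD N \<theta> = (real N)\<^sup>2 / 4 \<longleftrightarrow> (C \<theta>)\<^sup>2 + (Sn \<theta>)\<^sup>2 = 0"
      using DDe[of \<theta>] by (intro iffI) linarith+
    also have "\<dots> \<longleftrightarrow> C \<theta> = 0 \<and> Sn \<theta> = 0" by (simp add: sum_power2_eq_zero_iff)
    finally show ?thesis .
  qed
  define \<theta>0 where "\<theta>0 k = real k * pi / real N" for k :: nat
  have D0: "DD N \<theta>0 = (real N)\<^sup>2 / 4"
    using zero_config[OF assms(2)] unfolding DDmax C_def Sn_def \<theta>0_def by simp
  have Npos: "(real N)\<^sup>2 / 4 > 0" using assms(2) by simp
  have P1: "\<forall>r>0. \<rho>' r \<noteq> 0 \<longrightarrow>
        (\<forall>\<theta>. (\<forall>\<theta>'. detI \<rho> N s r \<theta>' \<le> detI \<rho> N s r \<theta>) \<longleftrightarrow> (C \<theta> = 0 \<and> Sn \<theta> = 0))"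
  proof (intro allI impI)
    fix r :: real and \<theta> assume r: "r > 0" "\<rho>' r \<noteq> 0"
    have cp: "(?c r)\<^sup>2 > 0" using cpos[of r] r by simp
    show "(\<forall>\<theta>'. detI \<rho> N s r \<theta>' \<le> detI \<rho> N s r \<theta>) \<longleftrightarrow> (C \<theta> = 0 \<and> Sn \<theta> = 0)"
    proof
      assume "\<forall>\<theta>'. detI \<rho> N s r \<theta>' \<le> detI \<rho> N s r \<theta>"
      then have "detI \<rho> N s r \<theta>0 \<le> detI \<rho> N s r \<theta>" by blast
      then have "(?c r)\<^sup>2 * DD N \<theta>0 \<le> (?c r)\<^sup>2 * DD N \<theta>" unfolding dI[OF r(1)] .
      then have "DD N \<theta>0 \<le> DD N \<theta>" using cp by simp
      then have "DD N \<theta> = (real N)\<^sup>2 / 4" using D0 DDle[of \<theta>] by linarith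
      then show "C \<theta> = 0 \<and> Sn \<theta> = 0" using DDmax by blast
    next
      assume "C \<theta> = 0 \<and> Sn \<theta> = 0"
      then have "DD N \<theta> = (real N)\<^sup>2 / 4" using DDmax by blast
      then have "DD N \<theta>' \<le> DD N \<theta>" for \<theta>' using DDle[of \<theta>'] by simp
      then show "\<forall>\<theta>'. detI \<rho> N s r \<theta>' \<le> detI \<rho> N s r \<theta>"
        unfolding dI[OF r(1)] using cp by (intro allI mult_left_mono) auto
    qed
  qed
  have P2: "\<forall>\<theta>. (\<exists>k\<in>{1..N}. \<exists>m\<in>{1..N}. sin (\<theta> k - \<theta> m) \<noteq> 0) \<longrightarrow>
        (\<forall>r\<in>{r\<^sub>1..r\<^sub>2}. (\<forall>r'\<in>{r\<^sub>1..r\<^sub>2}. detI \<rho> N s r' \<theta> \<le> detI \<rho> N s r \<theta>) \<longleftrightarrow>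
              r \<in> argmax_on ?c {r\<^sub>1..r\<^sub>2})"
  proof (intro allI impI ballI)
    fix \<theta> :: "nat \<Rightarrow> real" and r :: real assume h: "\<exists>k\<in>{1..N}. \<exists>m\<in>{1..N}. sin (\<theta> k - \<theta> m) \<noteq> 0" and r: "r \<in> {r\<^sub>1..r\<^sub>2}"
    have Dp: "DD N \<theta> > 0" using h DD_pos by blast
    have "(\<forall>r'\<in>{r\<^sub>1..r\<^sub>2}. detI \<rho> N s r' \<theta> \<le> detI \<rho> N s r \<theta>) \<longleftrightarrow>
          (\<forall>r'\<in>{r\<^sub>1..r\<^sub>2}. ?c r' \<le> ?c r)"
    proof (intro ball_cong refl)
      fix r' assume r': "r' \<in> {r\<^sub>1..r\<^sub>2}"
      have pos: "r > 0" "r' > 0" using r r' assms(6) by auto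
      have "detI \<rho> N s r' \<theta> \<le> detI \<rho> N s r \<theta> \<longleftrightarrow> (?c r')\<^sup>2 \<le> (?c r)\<^sup>2"
        using dI pos Dp by simp
      also have "\<dots> \<longleftrightarrow> ?c r' \<le> ?c r" using sq pos by simp
      finally show "detI \<rho> N s r' \<theta> \<le> detI \<rho> N s r \<theta> \<longleftrightarrow> ?c r' \<le> ?c r" .
    qed
    then show "(\<forall>r'\<in>{r\<^sub>1..r\<^sub>2}. detI \<rho> N s r' \<theta> \<le> detI \<rho> N s r \<theta>) \<longleftrightarrow> r \<in> argmax_on ?c {r\<^sub>1..r\<^sub>2}"
      using r unfolding argmax_on_def by simp
  qed
  have P3: "(\<exists>x\<in>{r\<^sub>1..r\<^sub>2}. \<rho>' x \<noteq> 0) \<longrightarrow>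
        (\<forall>\<theta>. \<forall>r\<in>{r\<^sub>1..r\<^sub>2}.
           (\<forall>\<theta>'. \<forall>r'\<in>{r\<^sub>1..r\<^sub>2}. detI \<rho> N s r' \<theta>' \<le> detI \<rho> N s r \<theta>) \<longleftrightarrow>
           (C \<theta> = 0 \<and> Sn \<theta> = 0 \<and> r \<in> argmax_on ?c {r\<^sub>1..r\<^sub>2}))"
  proof (intro impI allI ballI)
    fix \<theta> :: "nat \<Rightarrow> real" and r :: real assume ex: "\<exists>x\<in>{r\<^sub>1..r\<^sub>2}. \<rho>' x \<noteq> 0" and r: "r \<in> {r\<^sub>1..r\<^sub>2}"
    then obtain x where x: "x \<in> {r\<^sub>1..r\<^sub>2}" "\<rho>' x \<noteq> 0" by blast
    have rp: "r > 0" using r assms(6) by auto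
    show "(\<forall>\<theta>'. \<forall>r'\<in>{r\<^sub>1..r\<^sub>2}. detI \<rho> N s r' \<theta>' \<le> detI \<rho> N s r \<theta>) \<longleftrightarrow>
           (C \<theta> = 0 \<and> Sn \<theta> = 0 \<and> r \<in> argmax_on ?c {r\<^sub>1..r\<^sub>2})"
    proof
      assume M: "\<forall>\<theta>'. \<forall>r'\<in>{r\<^sub>1..r\<^sub>2}. detI \<rho> N s r' \<theta>' \<le> detI \<rho> N s r \<theta>"
      have xp: "x > 0" using x assms(6) by auto
      have "detI \<rho> N s x \<theta>0 \<le> detI \<rho> N s r \<theta>" using M x(1) by blast
      then have "(?c x)\<^sup>2 * DD N \<theta>0 \<le> (?c r)\<^sup>2 * DD N \<theta>" unfolding dI[OF xp] dI[OF rp] .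
      moreover have "(?c x)\<^sup>2 * DD N \<theta>0 > 0"
      proof (intro mult_pos_pos)
        show "0 < (?c x)\<^sup>2" using cpos[of x] xp x by simp
        show "0 < DD N \<theta>0" using D0 Npos by linarith
      qed
      ultimately have "(?c r)\<^sup>2 * DD N \<theta> > 0" by linarith
      then have "(?c r)\<^sup>2 \<noteq> 0" by auto
      then have cr: "(?c r)\<^sup>2 > 0" by (simp add: less_le)
      have "detI \<rho> N s r \<theta>0 \<le> detI \<rho> N s r \<theta>" using M r by blast
      then have "(?c r)\<^sup>2 * DD N \<theta>0 \<le> (?c r)\<^sup>2 * DD N \<theta>" unfolding dI[OF rp] .
      then have "DD N \<theta>0 \<le> DD N \<theta>" using cr by simp
      then have "DD N \<theta> = (real N)\<^sup>2 / 4" using D0 DDle[of \<theta>] by linarith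
      then have CS: "C \<theta> = 0 \<and> Sn \<theta> = 0" using DDmax by blast
      have "?c r' \<le> ?c r" if r': "r' \<in> {r\<^sub>1..r\<^sub>2}" for r'
      proof -
        have rp': "r' > 0" using r' assms(6) by auto
        have "detI \<rho> N s r' \<theta>0 \<le> detI \<rho> N s r \<theta>" using M r' by blast
        moreover have eq: "DD N \<theta> = DD N \<theta>0" using D0 \<open>DD N \<theta> = (real N)\<^sup>2 / 4\<close> by simp
        ultimately have "(?c r')\<^sup>2 * DD N \<theta>0 \<le> (?c r)\<^sup>2 * DD N \<theta>0"
          unfolding dI[OF rp] dI[OF rp'] eq by blast
        moreover have "DD N \<theta>0 > 0" using D0 Npos by linarith
        ultimately have "(?c r')\<^sup>2 \<le> (?c r)\<^sup>2" by (rule mult_right_le_imp_le)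
        then show ?thesis using sq rp rp' by simp
      qed
      then show "C \<theta> = 0 \<and> Sn \<theta> = 0 \<and> r \<in> argmax_on ?c {r\<^sub>1..r\<^sub>2}"
        using CS r unfolding argmax_on_def by simp
    next
      assume A: "C \<theta> = 0 \<and> Sn \<theta> = 0 \<and> r \<in> argmax_on ?c {r\<^sub>1..r\<^sub>2}"
      then have Dm: "DD N \<theta> = (real N)\<^sup>2 / 4" using DDmax by blast
      show "\<forall>\<theta>'. \<forall>r'\<in>{r\<^sub>1..r\<^sub>2}. detI \<rho> N s r' \<theta>' \<le> detI \<rho> N s r \<theta>"
      proof (intro allI ballI)
        fix \<theta>' r' assume r': "r' \<in> {r\<^sub>1..r\<^sub>2}"
        have rp': "r' > 0" using r' assms(6) by auto
        have le: "?c r' \<le> ?c r" using A r' unfolding argmax_on_def by simp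
        have "(?c r')\<^sup>2 \<le> (?c r)\<^sup>2" using sq rp rp' le by simp
        have "detI \<rho> N s r' \<theta>' = (?c r')\<^sup>2 * DD N \<theta>'" using dI rp' by simp
        also have "\<dots> \<le> (?c r')\<^sup>2 * ((real N)\<^sup>2 / 4)" using DDle[of \<theta>'] by (intro mult_left_mono) auto
        also have "\<dots> \<le> (?c r)\<^sup>2 * ((real N)\<^sup>2 / 4)"
          using \<open>(?c r')\<^sup>2 \<le> (?c r)\<^sup>2\<close> Npos by (simp add: mult_right_mono)
        also have "\<dots> = detI \<rho> N s r \<theta>" using dI rp Dm by simp
        finally show "detI \<rho> N s r' \<theta>' \<le> detI \<rho> N s r \<theta>" .
      qed
    qed
  qed
  note P1' = P1[unfolded C_def Sn_def]
  note P3' = P3[unfolded C_def Sn_def]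
  show ?thesis unfolding fc by (intro conjI P1' P2 P3')
qed

end
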